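(* Let $p=p(n)$ satisfy $pn^{1/2}\to\infty$. For all $\varepsilon>0$ and $\rho>0$ there exists $D(\varepsilon,\rho)>0$ such that $G(n,p)$ a.a.s. has the following property: for every vertex set $X$ with $|X|\ge Dp^{-2}$, there are at most $\varepsilon n^2p$ edges $\{v,w\}$ of $G[V\setminus X]$ such that the number of common neighbours of $v$ and $w$ in $X$ is not in $[(1-\rho)|X|p^2,(1+\rho)|X|p^2]$.
   Context: $G=G(n,p)$ is the binomial random graph on an $n$-vertex set $V$; a.a.s. means with probability tending to $1$ as $n\to\infty$. *)

theory Defs
  imports "HOL-Probability.Probability"
begin

text \<open>Vertex set V = {0..<n}. Potential edges are pairs (i,j) with i < j < n.
A graph is encoded as a function E on pairs; only the values on potential
edges matter (all other values are False under gnp).\<close>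

definition vpairs :: "nat \<Rightarrow> (nat \<times> nat) set" where
  "vpairs n = {(i, j). i < j \<and> j < n}"

definition gnp :: "nat \<Rightarrow> real \<Rightarrow> (nat \<times> nat \<Rightarrow> bool) pmf" where
  "gnp n p = Pi_pmf (vpairs n) False (\<lambda>_. bernoulli_pmf p)"

definition adj :: "(nat \<times> nat \<Rightarrow> bool) \<Rightarrow> nat \<Rightarrow> nat \<Rightarrow> bool" where
  "adj E v w \<longleftrightarrow> (v < w \<and> E (v, w)) \<or> (w < v \<and> E (w, v))"

definition common_nbrs :: "(nat \<times> nat \<Rightarrow> bool) \<Rightarrow> nat set \<Rightarrow> nat \<Rightarrow> nat \<Rightarrow> nat" where
  "common_nbrs E X v w = card {x \<in> X. adj E v x \<and> adj E w x}"

definition bad_edges ::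
  "nat \<Rightarrow> real \<Rightarrow> real \<Rightarrow> (nat \<times> nat \<Rightarrow> bool) \<Rightarrow> nat set \<Rightarrow> (nat \<times> nat) set" where
  "bad_edges n p \<rho> E X =
     {(v, w) \<in> vpairs n. v \<notin> X \<and> w \<notin> X \<and> E (v, w) \<and>
        \<not> ((1 - \<rho>) * real (card X) * p\<^sup>2 \<le> real (common_nbrs E X v w) \<and>
             real (common_nbrs E X v w) \<le> (1 + \<rho>) * real (card X) * p\<^sup>2)}"

definition good_property ::
  "nat \<Rightarrow> real \<Rightarrow> real \<Rightarrow> real \<Rightarrow> real \<Rightarrow> (nat \<times> nat \<Rightarrow> bool) \<Rightarrow> bool" where
  "good_property n p \<epsilon> \<rho> D E \<longleftrightarrow>
     (\<forall>X. X \<subseteq> {..<n} \<longrightarrow> real (card X) \<ge> D / p\<^sup>2 \<longrightarrow>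
        real (card (bad_edges n p \<rho> E X)) \<le> \<epsilon> * (real n)\<^sup>2 * p)"

end

theory Submission
  imports Defs
begin


lemma finite_set_Pi_pmf_bool:
  fixes P :: "'a \<Rightarrow> bool pmf"
  assumes "finite I"
  shows "finite (set_pmf (Pi_pmf I d P))"
proof -
  have "finite (PiE_dflt I d (set_pmf \<circ> P))"
    by (rule finite_PiE_dflt[OF assms], rule finite)
  thus ?thesis by (rule finite_subset[OF set_Pi_pmf_subset'[OF assms]])
qed

lemma indep2:
  fixes P :: "'a \<Rightarrow> bool pmf"
  assumes fin: "finite I" and disj: "S \<inter> T = {}"
    and A: "\<And>f g. (\<And>x. x \<in> S \<Longrightarrow> f x = g x) \<Longrightarrow> f \<in> A \<longleftrightarrow> g \<in> A"
    and B: "\<And>f g. (\<And>x. x \<in> T \<Longrightarrow> f x = g x) \<Longrightarrow> f \<in> B \<longleftrightarrow> g \<in> B"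
  shows "measure_pmf.prob (Pi_pmf I d P) (A \<inter> B) =
         measure_pmf.prob (Pi_pmf I d P) A * measure_pmf.prob (Pi_pmf I d P) B"
proof -
  define S' where "S' = I \<inter> S"
  define R where "R = I - S"
  define M where "M = Pi_pmf S' d P"
  define N where "N = Pi_pmf R d P"
  define h where "h = (\<lambda>(f::'a\<Rightarrow>bool,g::'a\<Rightarrow>bool) x. if x \<in> S' then f x else g x)"
  have finS: "finite S'" "finite R" using fin by (auto simp: S'_def R_def)
  have IE: "I = S' \<union> R" "S' \<inter> R = {}" by (auto simp: S'_def R_def)
  have PI: "Pi_pmf I d P = map_pmf h (pair_pmf M N)"
  proof -
    have "Pi_pmf (S' \<union> R) d P = map_pmf h (pair_pmf M N)"
      unfolding M_def N_def h_def by (rule Pi_pmf_union[OF finS IE(2)])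
    thus ?thesis by (simp only: IE(1)[symmetric])
  qed
  have sM: "f x = d" if "f \<in> set_pmf M" "x \<notin> S'" for f x
    using subsetD[OF set_Pi_pmf_subset[OF finS(1), of d P] that(1)[unfolded M_def]] that(2) by simp
  have sN: "f x = d" if "f \<in> set_pmf N" "x \<notin> R" for f x
    using subsetD[OF set_Pi_pmf_subset[OF finS(2), of d P] that(1)[unfolded N_def]] that(2) by simp
  have hA: "h (f,g) \<in> A \<longleftrightarrow> f \<in> A" if "f \<in> set_pmf M" "g \<in> set_pmf N" for f g
    by (rule A) (use sM[OF that(1)] sN[OF that(2)] in \<open>auto simp: h_def S'_def R_def\<close>)
  have hB: "h (f,g) \<in> B \<longleftrightarrow> g \<in> B" if "f \<in> set_pmf M" "g \<in> set_pmf N" for f g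
    by (rule B) (use sM[OF that(1)] sN[OF that(2)] disj in \<open>auto simp: h_def S'_def R_def\<close>)
  have cM: "countable (X \<inter> set_pmf M)" for X
    using finite_set_Pi_pmf_bool[OF finS(1)] unfolding M_def by (intro countable_finite) auto
  have cN: "countable (X \<inter> set_pmf N)" for X
    using finite_set_Pi_pmf_bool[OF finS(2)] unfolding N_def by (intro countable_finite) auto
  have gen: "measure_pmf.prob (Pi_pmf I d P) (A' \<inter> B') =
       measure_pmf.prob M A'' * measure_pmf.prob N B''"
    if "\<And>f g. f \<in> set_pmf M \<Longrightarrow> g \<in> set_pmf N \<Longrightarrow> h (f,g) \<in> A' \<inter> B' \<longleftrightarrow> f \<in> A'' \<and> g \<in> B''"
    for A' B' A'' B''
  proof -
    have "measure_pmf.prob (Pi_pmf I d P) (A' \<inter> B') =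
          measure_pmf.prob (pair_pmf M N) (h -` (A' \<inter> B') \<inter> set_pmf (pair_pmf M N))"
      unfolding PI measure_map_pmf by (rule measure_Int_set_pmf[symmetric])
    also have "h -` (A' \<inter> B') \<inter> set_pmf (pair_pmf M N) = (A'' \<inter> set_pmf M) \<times> (B'' \<inter> set_pmf N)"
      using that by auto
    also have "measure_pmf.prob (pair_pmf M N) \<dots> =
        measure_pmf.prob M (A'' \<inter> set_pmf M) * measure_pmf.prob N (B'' \<inter> set_pmf N)"
      by (rule measure_pmf_prob_product[OF cM cN])
    finally show ?thesis by (simp add: measure_Int_set_pmf)
  qed
  have 1: "measure_pmf.prob (Pi_pmf I d P) (A \<inter> B) = measure_pmf.prob M A * measure_pmf.prob N B"
    by (rule gen) (use hA hB in auto)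
  have 2: "measure_pmf.prob (Pi_pmf I d P) (A \<inter> UNIV) = measure_pmf.prob M A * measure_pmf.prob N UNIV"
    by (rule gen) (use hA in auto)
  have 3: "measure_pmf.prob (Pi_pmf I d P) (UNIV \<inter> B) = measure_pmf.prob M UNIV * measure_pmf.prob N B"
    by (rule gen) (use hB in auto)
  have u: "measure_pmf.prob M UNIV = 1" "measure_pmf.prob N UNIV = 1"
    using measure_pmf.prob_space[of M] measure_pmf.prob_space[of N] by simp_all
  have p2: "measure_pmf.prob (Pi_pmf I d P) A = measure_pmf.prob M A" using 2 u by simp
  have p3: "measure_pmf.prob (Pi_pmf I d P) B = measure_pmf.prob N B" using 3 u by simp
  show ?thesis by (simp only: 1 p2 p3)
qed



definition dep :: "'a set \<Rightarrow> ('a \<Rightarrow> bool) set \<Rightarrow> bool" where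
  "dep S A \<longleftrightarrow> (\<forall>f g. (\<forall>x\<in>S. f x = g x) \<longrightarrow> (f \<in> A \<longleftrightarrow> g \<in> A))"

lemma dep_Int: "dep S A \<Longrightarrow> dep T B \<Longrightarrow> dep (S \<union> T) (A \<inter> B)"
  unfolding dep_def by blast

lemma dep_UNIV: "dep S UNIV" unfolding dep_def by blast

lemma dep_mono: "dep S A \<Longrightarrow> S \<subseteq> T \<Longrightarrow> dep T A"
  unfolding dep_def by blast

lemma indep2':
  fixes P :: "'a \<Rightarrow> bool pmf"
  assumes "finite I" "S \<inter> T = {}" "dep S A" "dep T B"
  shows "measure_pmf.prob (Pi_pmf I d P) (A \<inter> B) =
         measure_pmf.prob (Pi_pmf I d P) A * measure_pmf.prob (Pi_pmf I d P) B"
  using assms(3,4) unfolding dep_def by (intro indep2[OF assms(1,2)]) blast+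

lemma indepN:
  fixes P :: "'a \<Rightarrow> bool pmf" and S :: "'v \<Rightarrow> 'a set" and A :: "'v \<Rightarrow> ('a \<Rightarrow> bool) set"
  assumes fin: "finite I" and K: "finite K"
    and disj: "\<And>u v. u \<in> K \<Longrightarrow> v \<in> K \<Longrightarrow> u \<noteq> v \<Longrightarrow> S u \<inter> S v = {}"
    and dp: "\<And>v. v \<in> K \<Longrightarrow> dep (S v) (A v)"
  shows "measure_pmf.prob (Pi_pmf I d P) (\<Inter>v\<in>K. A v) = (\<Prod>v\<in>K. measure_pmf.prob (Pi_pmf I d P) (A v))
         \<and> dep (\<Union>v\<in>K. S v) (\<Inter>v\<in>K. A v)"
  using K disj dp
proof (induction K rule: finite_induct)
  case empty
  then show ?case using measure_pmf.prob_space[of "Pi_pmf I d P"] by (simp add: dep_UNIV)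
next
  case (insert v K)
  have IH: "measure_pmf.prob (Pi_pmf I d P) (\<Inter>v\<in>K. A v) = (\<Prod>v\<in>K. measure_pmf.prob (Pi_pmf I d P) (A v))"
     "dep (\<Union>v\<in>K. S v) (\<Inter>v\<in>K. A v)"
    using insert.IH insert.prems by blast+
  have dv: "dep (S v) (A v)" using insert.prems by blast
  have dj: "S v \<inter> (\<Union>v\<in>K. S v) = {}"
  proof -
    have "S v \<inter> S u = {}" if "u \<in> K" for u
      using insert.prems(1)[of v u] that insert.hyps(2) by auto
    thus ?thesis by blast
  qed
  have eq: "(\<Inter>u\<in>insert v K. A u) = A v \<inter> (\<Inter>u\<in>K. A u)" by simp
  have "measure_pmf.prob (Pi_pmf I d P) (\<Inter>u\<in>insert v K. A u) =
        measure_pmf.prob (Pi_pmf I d P) (A v) * measure_pmf.prob (Pi_pmf I d P) (\<Inter>u\<in>K. A u)"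
    unfolding eq by (rule indep2'[OF fin dj dv IH(2)])
  also have "\<dots> = (\<Prod>u\<in>insert v K. measure_pmf.prob (Pi_pmf I d P) (A u))"
    using insert.hyps IH(1) by simp
  finally show ?case
    using dep_Int[OF dv IH(2)] eq by simp
qed

lemma count_bound:
  fixes P :: "'a \<Rightarrow> bool pmf" and S :: "'v \<Rightarrow> 'a set" and A :: "'v \<Rightarrow> ('a \<Rightarrow> bool) set"
  assumes fin: "finite I" and U: "finite U"
    and disj: "\<And>u v. u \<in> U \<Longrightarrow> v \<in> U \<Longrightarrow> u \<noteq> v \<Longrightarrow> S u \<inter> S v = {}"
    and dp: "\<And>v. v \<in> U \<Longrightarrow> dep (S v) (A v)"
    and q: "\<And>v. v \<in> U \<Longrightarrow> measure_pmf.prob (Pi_pmf I d P) (A v) \<le> q" and q0: "0 \<le> q"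
  shows "measure_pmf.prob (Pi_pmf I d P) {f. card {v\<in>U. f \<in> A v} \<ge> k} \<le> 2 ^ card U * q ^ k"
proof -
  let ?M = "Pi_pmf I d P"
  let ?F = "{K. K \<subseteq> U \<and> card K = k}"
  have finF: "finite ?F" using U by simp
  have sub: "{f. card {v\<in>U. f \<in> A v} \<ge> k} \<subseteq> (\<Union>K\<in>?F. \<Inter>v\<in>K. A v)"
  proof
    fix f assume "f \<in> {f. card {v\<in>U. f \<in> A v} \<ge> k}"
    hence "card {v\<in>U. f \<in> A v} \<ge> k" by simp
    then obtain K where K: "K \<subseteq> {v\<in>U. f \<in> A v}" "card K = k"
      by (meson obtain_subset_with_card_n)
    thus "f \<in> (\<Union>K\<in>?F. \<Inter>v\<in>K. A v)" by blast
  qed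
  have "measure_pmf.prob ?M {f. card {v\<in>U. f \<in> A v} \<ge> k} \<le> measure_pmf.prob ?M (\<Union>K\<in>?F. \<Inter>v\<in>K. A v)"
    by (rule measure_pmf.finite_measure_mono[OF sub]) simp
  also have "\<dots> \<le> (\<Sum>K\<in>?F. measure_pmf.prob ?M (\<Inter>v\<in>K. A v))"
    by (rule measure_pmf.finite_measure_subadditive_finite[OF finF]) simp
  also have "\<dots> \<le> (\<Sum>K\<in>?F. q ^ k)"
  proof (rule sum_mono)
    fix K assume "K \<in> ?F"
    hence KU: "K \<subseteq> U" and cK: "card K = k" by auto
    have fK: "finite K" by (rule finite_subset[OF KU U])
    have "measure_pmf.prob ?M (\<Inter>v\<in>K. A v) = (\<Prod>v\<in>K. measure_pmf.prob ?M (A v))"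
    proof -
      have "\<And>u v. u \<in> K \<Longrightarrow> v \<in> K \<Longrightarrow> u \<noteq> v \<Longrightarrow> S u \<inter> S v = {}"
        using disj KU by blast
      moreover have "\<And>v. v \<in> K \<Longrightarrow> dep (S v) (A v)" using dp KU by blast
      ultimately show ?thesis using indepN[OF fin fK, of S A d P] by simp
    qed
    also have "\<dots> \<le> (\<Prod>v\<in>K. q)"
      by (rule prod_mono) (use KU q in auto)
    also have "\<dots> = q ^ k" using cK by simp
    finally show "measure_pmf.prob ?M (\<Inter>v\<in>K. A v) \<le> q ^ k" .
  qed
  also have "\<dots> = real (card ?F) * q ^ k" by simp
  also have "\<dots> \<le> 2 ^ card U * q ^ k"
  proof (cases "U = {}")
    case True
    hence "?F = (if k = 0 then {{}} else {})" by auto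
    thus ?thesis using True q0 by simp
  next
    case False
    have "card ?F \<le> card (Pow U)" using U by (intro card_mono) auto
    hence "real (card ?F) \<le> 2 ^ card U" using U by (simp add: card_Pow)
    thus ?thesis using q0 by (intro mult_right_mono) auto
  qed
  finally show ?thesis .
qed



lemma mgf_bound:
  fixes p t :: real
  assumes fin: "finite I" and CI: "C \<subseteq> I" and p: "0 \<le> p" "p \<le> 1"
  shows "measure_pmf.expectation (Pi_pmf I d (\<lambda>_. bernoulli_pmf p)) (\<lambda>f. exp (t * real (card {c\<in>C. f c})))
         \<le> exp (real (card C) * p * (exp t - 1))"
proof -
  let ?M = "Pi_pmf I d (\<lambda>_. bernoulli_pmf p)"
  define g where "g = (\<lambda>c (b::bool). if c \<in> C then exp (t * (if b then 1 else 0)) else (1::real))"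
  have finC: "finite C" using finite_subset[OF CI fin] .
  have eq: "exp (t * real (card {c\<in>C. f c})) = (\<Prod>c\<in>I. g c (f c))" for f
  proof -
    have "(\<Prod>c\<in>I. g c (f c)) = (\<Prod>c\<in>C. exp (t * (if f c then 1 else 0)))"
      unfolding g_def using fin CI by (intro prod.mono_neutral_cong_right) auto
    also have "\<dots> = exp (\<Sum>c\<in>C. t * (if f c then 1 else 0))"
      using finC by (simp add: exp_sum)
    also have "(\<Sum>c\<in>C. t * (if f c then 1 else 0)) = t * real (card {c\<in>C. f c})"
    proof -
      have "(\<Sum>c\<in>C. (if f c then 1 else 0::real)) = real (card {c\<in>C. f c})"
        using finC by (simp add: sum.If_cases Collect_conj_eq Int_commute)
      thus ?thesis by (simp add: sum_distrib_left[symmetric])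
    qed
    finally show ?thesis by simp
  qed
  have "measure_pmf.expectation ?M (\<lambda>f. exp (t * real (card {c\<in>C. f c})))
      = measure_pmf.expectation ?M (\<lambda>f. \<Prod>c\<in>I. g c (f c))"
    by (simp only: eq)
  also have "\<dots> = (\<Prod>c\<in>I. measure_pmf.expectation (bernoulli_pmf p) (g c))"
    by (rule expectation_prod_Pi_pmf[OF fin])
       (auto simp: g_def intro!: integrable_measure_pmf_finite)
  also have "\<dots> = (\<Prod>c\<in>C. (exp t * p + (1 - p)))"
    unfolding g_def using fin CI p by (intro prod.mono_neutral_cong_right) auto
  also have "\<dots> = (1 + p * (exp t - 1)) ^ card C"
    by (simp add: algebra_simps)
  also have "\<dots> \<le> (exp (p * (exp t - 1))) ^ card C"
  proof (rule power_mono)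
    show "1 + p * (exp t - 1) \<le> exp (p * (exp t - 1))" by (rule exp_ge_add_one_self)
    have "0 \<le> p * exp t + (1 - p)" using p by simp
    thus "0 \<le> 1 + p * (exp t - 1)" by (simp add: algebra_simps)
  qed
  also have "\<dots> = exp (real (card C) * p * (exp t - 1))"
    by (simp add: exp_of_nat_mult[symmetric] mult.assoc)
  finally show ?thesis .
qed

lemma tail_bound:
  fixes p t b :: real
  assumes fin: "finite I" and CI: "C \<subseteq> I" and p: "0 \<le> p" "p \<le> 1"
  shows "measure_pmf.prob (Pi_pmf I d (\<lambda>_. bernoulli_pmf p)) {f. t * real (card {c\<in>C. f c}) \<ge> b}
         \<le> exp (real (card C) * p * (exp t - 1) - b)"
proof -
  let ?M = "Pi_pmf I d (\<lambda>_. bernoulli_pmf p)"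
  have fs: "finite (set_pmf ?M)" by (rule finite_set_Pi_pmf_bool[OF fin])
  have "{f. t * real (card {c\<in>C. f c}) \<ge> b} = {f \<in> space (measure_pmf ?M). exp (t * real (card {c\<in>C. f c})) \<ge> exp b}"
    by simp
  hence "measure_pmf.prob ?M {f. t * real (card {c\<in>C. f c}) \<ge> b}
        = measure_pmf.prob ?M {f \<in> space (measure_pmf ?M). exp (t * real (card {c\<in>C. f c})) \<ge> exp b}"
    by simp
  also have "\<dots> \<le> measure_pmf.expectation ?M (\<lambda>f. exp (t * real (card {c\<in>C. f c}))) / exp b"
    by (rule integral_Markov_inequality_measure[where A = UNIV])
       (auto intro!: integrable_measure_pmf_finite[OF fs])
  also have "\<dots> \<le> exp (real (card C) * p * (exp t - 1)) / exp b"
    by (rule divide_right_mono[OF mgf_bound[OF fin CI p]]) simp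
  also have "\<dots> = exp (real (card C) * p * (exp t - 1) - b)"
    by (simp add: exp_diff)
  finally show ?thesis .
qed

lemma exp_neg_bound:
  fixes s :: real assumes "0 \<le> s" "s \<le> 1"
  shows "exp (- s) \<le> 1 - s + s\<^sup>2"
proof -
  have "exp (-s) = 1 / exp s" by (simp add: exp_minus field_simps)
  also have "\<dots> \<le> 1 / (1 + s)"
    using assms by (intro divide_left_mono) (auto simp: add_pos_nonneg)
  also have "\<dots> \<le> 1 - s + s\<^sup>2"
  proof -
    have "1 \<le> (1 + s) * (1 - s + s\<^sup>2)" using assms by (simp add: algebra_simps power2_eq_square power3_eq_cube)
    thus ?thesis using assms by (simp add: divide_simps mult.commute)
  qed
  finally show ?thesis .
qed

lemma chernoff_upper:
  fixes p r :: real
  assumes fin: "finite I" and CI: "C \<subseteq> I" and p: "0 \<le> p" "p \<le> 1" and r: "0 \<le> r" "r \<le> 1"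
  shows "measure_pmf.prob (Pi_pmf I d (\<lambda>_. bernoulli_pmf p)) {f. real (card {c\<in>C. f c}) \<ge> (1 + r) * (real (card C) * p)}
         \<le> exp (- (r\<^sup>2 * (real (card C) * p) / 4))"
proof -
  define \<mu> where "\<mu> = real (card C) * p"
  have mu0: "0 \<le> \<mu>" unfolding \<mu>_def using p by simp
  have "{f. real (card {c\<in>C. f c}) \<ge> (1 + r) * \<mu>} \<subseteq> {f. (r/2) * real (card {c\<in>C. f c}) \<ge> (r/2) * ((1 + r) * \<mu>)}"
    using r by (auto intro: mult_left_mono)
  hence "measure_pmf.prob (Pi_pmf I d (\<lambda>_. bernoulli_pmf p)) {f. real (card {c\<in>C. f c}) \<ge> (1 + r) * \<mu>}
      \<le> measure_pmf.prob (Pi_pmf I d (\<lambda>_. bernoulli_pmf p)) {f. (r/2) * real (card {c\<in>C. f c}) \<ge> (r/2) * ((1 + r) * \<mu>)}"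
    by (intro measure_pmf.finite_measure_mono) auto
  also have "\<dots> \<le> exp (\<mu> * (exp (r/2) - 1) - (r/2) * ((1 + r) * \<mu>))"
    unfolding \<mu>_def by (rule tail_bound[OF fin CI p])
  also have "\<dots> \<le> exp (- (r\<^sup>2 * \<mu> / 4))"
  proof -
    have "exp (r/2) \<le> 1 + r/2 + (r/2)\<^sup>2" using r by (intro exp_bound) auto
    hence "\<mu> * exp (r/2) \<le> \<mu> * (1 + r/2 + (r/2)\<^sup>2)" using mu0 by (intro mult_left_mono) auto
    hence h: "\<mu> * exp (r/2) \<le> \<mu> + \<mu> * r / 2 + \<mu> * (r * r) / 4" by (simp add: algebra_simps power2_eq_square)
    have "\<mu> * (exp (r/2) - 1) - r / 2 * ((1 + r) * \<mu>) = \<mu> * exp (r/2) - \<mu> - \<mu> * r / 2 - \<mu> * (r * r) / 2"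
      by (simp add: algebra_simps)
    also have "\<dots> \<le> - (\<mu> * (r * r) / 4)" using h by linarith
    also have "\<dots> = - (r\<^sup>2 * \<mu> / 4)" by (simp add: power2_eq_square algebra_simps)
    finally show ?thesis by (intro exp_mono)
  qed
  finally show ?thesis unfolding \<mu>_def .
qed

lemma chernoff_lower:
  fixes p r :: real
  assumes fin: "finite I" and CI: "C \<subseteq> I" and p: "0 \<le> p" "p \<le> 1" and r: "0 \<le> r" "r \<le> 1"
  shows "measure_pmf.prob (Pi_pmf I d (\<lambda>_. bernoulli_pmf p)) {f. real (card {c\<in>C. f c}) \<le> (1 - r) * (real (card C) * p)}
         \<le> exp (- (r\<^sup>2 * (real (card C) * p) / 4))"
proof -
  define \<mu> where "\<mu> = real (card C) * p"
  have mu0: "0 \<le> \<mu>" unfolding \<mu>_def using p by simp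
  have "{f. real (card {c\<in>C. f c}) \<le> (1 - r) * \<mu>} \<subseteq> {f. (-(r/2)) * real (card {c\<in>C. f c}) \<ge> (-(r/2)) * ((1 - r) * \<mu>)}"
    using r by (auto intro: mult_left_mono)
  hence "measure_pmf.prob (Pi_pmf I d (\<lambda>_. bernoulli_pmf p)) {f. real (card {c\<in>C. f c}) \<le> (1 - r) * \<mu>}
      \<le> measure_pmf.prob (Pi_pmf I d (\<lambda>_. bernoulli_pmf p)) {f. (-(r/2)) * real (card {c\<in>C. f c}) \<ge> (-(r/2)) * ((1 - r) * \<mu>)}"
    by (intro measure_pmf.finite_measure_mono) auto
  also have "\<dots> \<le> exp (\<mu> * (exp (-(r/2)) - 1) - (-(r/2)) * ((1 - r) * \<mu>))"
    unfolding \<mu>_def by (rule tail_bound[OF fin CI p])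
  also have "\<dots> \<le> exp (- (r\<^sup>2 * \<mu> / 4))"
  proof -
    have "exp (-(r/2)) \<le> 1 - r/2 + (r/2)\<^sup>2" using r by (intro exp_neg_bound) auto
    hence "\<mu> * exp (-(r/2)) \<le> \<mu> * (1 - r/2 + (r/2)\<^sup>2)" using mu0 by (intro mult_left_mono) auto
    hence h: "\<mu> * exp (-(r/2)) \<le> \<mu> - \<mu> * r / 2 + \<mu> * (r * r) / 4" by (simp add: algebra_simps power2_eq_square)
    have "\<mu> * (exp (-(r/2)) - 1) - (-(r/2)) * ((1 - r) * \<mu>) = \<mu> * exp (-(r/2)) - \<mu> + \<mu> * r / 2 - \<mu> * (r * r) / 2"
      by (simp add: field_simps)
    also have "\<dots> \<le> - (\<mu> * (r * r) / 4)" using h by linarith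
    also have "\<dots> = - (r\<^sup>2 * \<mu> / 4)" by (simp add: power2_eq_square algebra_simps)
    finally show ?thesis by (intro exp_mono)
  qed
  finally show ?thesis unfolding \<mu>_def .
qed

lemma chernoff_two:
  fixes p r :: real
  assumes fin: "finite I" and CI: "C \<subseteq> I" and p: "0 \<le> p" "p \<le> 1" and r: "0 \<le> r" "r \<le> 1"
  shows "measure_pmf.prob (Pi_pmf I d (\<lambda>_. bernoulli_pmf p))
          {f. \<not> ((1 - r) * (real (card C) * p) < real (card {c\<in>C. f c}) \<and> real (card {c\<in>C. f c}) < (1 + r) * (real (card C) * p))}
         \<le> 2 * exp (- (r\<^sup>2 * (real (card C) * p) / 4))"
proof -
  let ?M = "Pi_pmf I d (\<lambda>_. bernoulli_pmf p)"
  have "{f. \<not> ((1 - r) * (real (card C) * p) < real (card {c\<in>C. f c}) \<and> real (card {c\<in>C. f c}) < (1 + r) * (real (card C) * p))}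
     = {f. real (card {c\<in>C. f c}) \<le> (1 - r) * (real (card C) * p)} \<union> {f. real (card {c\<in>C. f c}) \<ge> (1 + r) * (real (card C) * p)}"
    by auto
  hence "measure_pmf.prob ?M {f. \<not> ((1 - r) * (real (card C) * p) < real (card {c\<in>C. f c}) \<and> real (card {c\<in>C. f c}) < (1 + r) * (real (card C) * p))}
     \<le> measure_pmf.prob ?M {f. real (card {c\<in>C. f c}) \<le> (1 - r) * (real (card C) * p)} + measure_pmf.prob ?M {f. real (card {c\<in>C. f c}) \<ge> (1 + r) * (real (card C) * p)}"
    by (simp add: measure_subadditive)
  also have "\<dots> \<le> 2 * exp (- (r\<^sup>2 * (real (card C) * p) / 4))"
    using chernoff_lower[OF assms, of d] chernoff_upper[OF assms, of d] by simp
  finally show ?thesis .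
qed



definition ep :: "nat \<Rightarrow> nat \<Rightarrow> nat \<times> nat" where "ep v w = (min v w, max v w)"

definition dev :: "real \<Rightarrow> real \<Rightarrow> nat \<Rightarrow> bool" where
  "dev r m s \<longleftrightarrow> \<not> ((1 - r) * m < real s \<and> real s < (1 + r) * m)"

lemma finite_vpairs: "finite (vpairs n)"
proof -
  have "vpairs n \<subseteq> {..<n} \<times> {..<n}" unfolding vpairs_def by auto
  thus ?thesis by (rule finite_subset) simp
qed

lemma adj_ep: "adj E v w \<longleftrightarrow> v \<noteq> w \<and> E (ep v w)"
  unfolding adj_def ep_def by (cases v w rule: linorder_cases) (auto simp: min_def max_def)

lemma ep_eq: "ep v x = ep w y \<Longrightarrow> (v = w \<and> x = y) \<or> (v = y \<and> x = w)"
  unfolding ep_def by (auto simp: min_def max_def split: if_splits)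

lemma ep_inj: "v \<notin> X \<Longrightarrow> inj_on (ep v) X"
  unfolding inj_on_def using ep_eq by blast

lemma ep_vpairs: "v < n \<Longrightarrow> w < n \<Longrightarrow> v \<noteq> w \<Longrightarrow> ep v w \<in> vpairs n"
  unfolding ep_def vpairs_def by (auto simp: min_def max_def)

lemma card_nbrs:
  assumes "v \<notin> X"
  shows "card {x\<in>X. adj E v x} = card {c\<in>ep v ` X. E c}"
proof -
  have "{c\<in>ep v ` X. E c} = ep v ` {x\<in>X. adj E v x}"
    using assms by (auto simp: adj_ep)
  moreover have "inj_on (ep v) {x\<in>X. adj E v x}"
    using ep_inj[OF assms] by (rule inj_on_subset) auto
  ultimately show ?thesis by (simp add: card_image)
qed

lemma claim_count:
  fixes p r :: real
  assumes p: "0 \<le> p" "p \<le> 1" and r: "0 \<le> r" "r \<le> 1"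
    and Z: "Z \<subseteq> {..<n}" and W: "W \<subseteq> {..<n}" and WZ: "W \<inter> Z = {}"
  shows "measure_pmf.prob (gnp n p)
           {E. card {w\<in>W. dev r (real (card Z) * p) (card {z\<in>Z. adj E w z})} \<ge> k}
         \<le> 2 ^ n * (2 * exp (- (r\<^sup>2 * (real (card Z) * p) / 4))) ^ k"
proof -
  define A where "A = (\<lambda>w. {E. dev r (real (card Z) * p) (card {z\<in>Z. adj E w z})})"
  have finW: "finite W" using W finite_subset by blast
  have AW: "\<And>w. w \<in> W \<Longrightarrow> A w = {E. dev r (real (card Z) * p) (card {c\<in>ep w ` Z. E c})}"
  proof -
    fix w assume "w \<in> W"
    hence "w \<notin> Z" using WZ by blast
    thus "A w = {E. dev r (real (card Z) * p) (card {c\<in>ep w ` Z. E c})}"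
      unfolding A_def by (simp add: card_nbrs)
  qed
  have "measure_pmf.prob (gnp n p) {E. card {w\<in>W. E \<in> A w} \<ge> k}
        \<le> 2 ^ card W * (2 * exp (- (r\<^sup>2 * (real (card Z) * p) / 4))) ^ k"
    unfolding gnp_def
  proof (rule count_bound[OF finite_vpairs finW, where S = "\<lambda>w. ep w ` Z"])
    fix u v assume uv: "u \<in> W" "v \<in> W" "u \<noteq> v"
    show "ep u ` Z \<inter> ep v ` Z = {}"
    proof (rule ccontr)
      assume "ep u ` Z \<inter> ep v ` Z \<noteq> {}"
      then obtain x y where "x \<in> Z" "y \<in> Z" "ep u x = ep v y" by blast
      thus False using ep_eq uv WZ by blast
    qed
  next
    fix v assume v: "v \<in> W"
    show "dep (ep v ` Z) (A v)"
      unfolding dep_def AW[OF v] by (auto intro!: arg_cong[where f = "dev _ _"] arg_cong[where f = card])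
  next
    fix v assume v: "v \<in> W"
    have CI: "ep v ` Z \<subseteq> vpairs n"
      using v W Z WZ by (auto intro!: ep_vpairs)
    have cZ: "card (ep v ` Z) = card Z"
      using WZ v by (intro card_image ep_inj) auto
    have "measure_pmf.prob (Pi_pmf (vpairs n) False (\<lambda>_. bernoulli_pmf p)) (A v) =
          measure_pmf.prob (Pi_pmf (vpairs n) False (\<lambda>_. bernoulli_pmf p))
          {f. \<not> ((1 - r) * (real (card (ep v ` Z)) * p) < real (card {c\<in>ep v ` Z. f c}) \<and>
               real (card {c\<in>ep v ` Z. f c}) < (1 + r) * (real (card (ep v ` Z)) * p))}"
      unfolding AW[OF v] cZ dev_def ..
    also have "\<dots> \<le> 2 * exp (- (r\<^sup>2 * (real (card (ep v ` Z)) * p) / 4))"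
      by (rule chernoff_two[OF finite_vpairs CI p r])
    finally show "measure_pmf.prob (Pi_pmf (vpairs n) False (\<lambda>_. bernoulli_pmf p)) (A v)
                  \<le> 2 * exp (- (r\<^sup>2 * (real (card Z) * p) / 4))" unfolding cZ .
  next
    show "0 \<le> 2 * exp (- (r\<^sup>2 * (real (card Z) * p) / 4))" by simp
  qed
  also have "\<dots> \<le> 2 ^ n * (2 * exp (- (r\<^sup>2 * (real (card Z) * p) / 4))) ^ k"
  proof (rule mult_right_mono)
    have "card W \<le> n" using card_mono[OF _ W] by simp
    thus "(2::real) ^ card W \<le> 2 ^ n" by (rule power_increasing) simp
  qed simp
  finally show ?thesis unfolding A_def by simp
qed



definition badpairs :: "nat \<Rightarrow> real \<Rightarrow> real \<Rightarrow> (nat \<times> nat \<Rightarrow> bool) \<Rightarrow> nat set \<Rightarrow> (nat \<times> nat) set" where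
  "badpairs n p \<rho> E X =
     {(v, w) \<in> vpairs n. v \<notin> X \<and> w \<notin> X \<and>
        \<not> ((1 - \<rho>) * real (card X) * p\<^sup>2 \<le> real (common_nbrs E X v w) \<and>
             real (common_nbrs E X v w) \<le> (1 + \<rho>) * real (card X) * p\<^sup>2)}"

lemma bad_edges_eq: "bad_edges n p \<rho> E X = {c \<in> badpairs n p \<rho> E X. E c}"
  unfolding bad_edges_def badpairs_def by auto

lemma common_nbrs_dep:
  assumes "\<And>c. fst c \<in> X \<or> snd c \<in> X \<Longrightarrow> E c = E' c"
  shows "common_nbrs E X v w = common_nbrs E' X v w"
proof -
  have "adj E u x = adj E' u x" if "x \<in> X" for u x
    using assms[of "ep u x"] that unfolding adj_ep ep_def by (auto simp: min_def max_def)
  thus ?thesis unfolding common_nbrs_def by (metis (no_types, lifting))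
qed

lemma badpairs_dep:
  assumes "\<And>c. fst c \<in> X \<or> snd c \<in> X \<Longrightarrow> E c = E' c"
  shows "badpairs n p \<rho> E X = badpairs n p \<rho> E' X"
  unfolding badpairs_def using common_nbrs_dep[OF assms] by simp

lemma final_bound:
  fixes p Mb a :: real
  assumes p: "0 \<le> p" "p \<le> 1"
  shows "measure_pmf.prob (gnp n p)
          {E. real (card (bad_edges n p \<rho> E X)) \<ge> a \<and> real (card (badpairs n p \<rho> E X)) \<le> Mb}
         \<le> exp (Mb * p * (exp 1 - 1) - a)"
proof -
  let ?M = "gnp n p"
  define S1 where "S1 = {c::nat\<times>nat. fst c \<in> X \<or> snd c \<in> X}"
  define S2 where "S2 = {c::nat\<times>nat. fst c \<notin> X \<and> snd c \<notin> X}"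
  define Fam where "Fam = {B0. B0 \<subseteq> vpairs n \<inter> S2 \<and> real (card B0) \<le> Mb}"
  define EB where "EB = (\<lambda>B0. {E. badpairs n p \<rho> E X = B0})"
  define G where "G = (\<lambda>B0. {E::nat\<times>nat\<Rightarrow>bool. 1 * real (card {c\<in>B0. E c}) \<ge> a})"
  define \<beta> where "\<beta> = exp (Mb * p * (exp 1 - 1) - a)"
  have finF: "finite Fam" unfolding Fam_def
    by (rule finite_subset[of _ "Pow (vpairs n)"]) (auto simp: finite_vpairs)
  have sub: "{E. real (card (bad_edges n p \<rho> E X)) \<ge> a \<and> real (card (badpairs n p \<rho> E X)) \<le> Mb}
      \<subseteq> (\<Union>B0\<in>Fam. EB B0 \<inter> G B0)"
  proof
    fix E assume E: "E \<in> {E. real (card (bad_edges n p \<rho> E X)) \<ge> a \<and> real (card (badpairs n p \<rho> E X)) \<le> Mb}"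
    have "badpairs n p \<rho> E X \<subseteq> vpairs n \<inter> S2" unfolding badpairs_def S2_def by auto
    hence "badpairs n p \<rho> E X \<in> Fam" using E unfolding Fam_def by auto
    moreover have "E \<in> EB (badpairs n p \<rho> E X) \<inter> G (badpairs n p \<rho> E X)"
      using E unfolding EB_def G_def bad_edges_eq by auto
    ultimately show "E \<in> (\<Union>B0\<in>Fam. EB B0 \<inter> G B0)" by blast
  qed
  have "measure_pmf.prob ?M {E. real (card (bad_edges n p \<rho> E X)) \<ge> a \<and> real (card (badpairs n p \<rho> E X)) \<le> Mb}
      \<le> measure_pmf.prob ?M (\<Union>B0\<in>Fam. EB B0 \<inter> G B0)"
    by (rule measure_pmf.finite_measure_mono[OF sub]) simp
  also have "\<dots> \<le> (\<Sum>B0\<in>Fam. measure_pmf.prob ?M (EB B0 \<inter> G B0))"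
    by (rule measure_pmf.finite_measure_subadditive_finite[OF finF]) simp
  also have "\<dots> \<le> (\<Sum>B0\<in>Fam. measure_pmf.prob ?M (EB B0) * \<beta>)"
  proof (rule sum_mono)
    fix B0 assume B0: "B0 \<in> Fam"
    have d1: "dep S1 (EB B0)" unfolding dep_def EB_def
    proof (intro allI impI)
      fix f g :: "nat\<times>nat \<Rightarrow> bool" assume h: "\<forall>x\<in>S1. f x = g x"
      have "badpairs n p \<rho> f X = badpairs n p \<rho> g X"
        by (rule badpairs_dep) (use h in \<open>auto simp: S1_def\<close>)
      thus "(f \<in> {E. badpairs n p \<rho> E X = B0}) = (g \<in> {E. badpairs n p \<rho> E X = B0})" by simp
    qed
    have d2: "dep S2 (G B0)" unfolding dep_def G_def
    proof (intro allI impI)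
      fix f g :: "nat\<times>nat \<Rightarrow> bool" assume "\<forall>x\<in>S2. f x = g x"
      hence "{c\<in>B0. f c} = {c\<in>B0. g c}" using B0 unfolding Fam_def by auto
      thus "(f \<in> {E. a \<le> 1 * real (card {c \<in> B0. E c})}) = (g \<in> {E. a \<le> 1 * real (card {c \<in> B0. E c})})"
        by simp
    qed
    have dj: "S1 \<inter> S2 = {}" unfolding S1_def S2_def by auto
    have "measure_pmf.prob ?M (EB B0 \<inter> G B0) = measure_pmf.prob ?M (EB B0) * measure_pmf.prob ?M (G B0)"
      unfolding gnp_def by (rule indep2'[OF finite_vpairs dj d1 d2])
    also have "\<dots> \<le> measure_pmf.prob ?M (EB B0) * \<beta>"
    proof (rule mult_left_mono)
      have CI: "B0 \<subseteq> vpairs n" using B0 unfolding Fam_def by auto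
      have "measure_pmf.prob ?M (G B0) \<le> exp (real (card B0) * p * (exp 1 - 1) - a)"
        unfolding gnp_def G_def by (rule tail_bound[OF finite_vpairs CI p])
      also have "\<dots> \<le> \<beta>" unfolding \<beta>_def
      proof (intro exp_mono diff_right_mono mult_right_mono)
        show "real (card B0) \<le> Mb" using B0 unfolding Fam_def by auto
        show "0 \<le> exp (1::real) - 1" by simp
      qed (use p in auto)
      finally show "measure_pmf.prob ?M (G B0) \<le> \<beta>" .
    qed simp
    finally show "measure_pmf.prob ?M (EB B0 \<inter> G B0) \<le> measure_pmf.prob ?M (EB B0) * \<beta>" .
  qed
  also have "\<dots> = measure_pmf.prob ?M (\<Union>B0\<in>Fam. EB B0) * \<beta>"
  proof -
    have "disjoint_family_on EB Fam" unfolding disjoint_family_on_def EB_def by auto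
    hence "measure_pmf.prob ?M (\<Union>B0\<in>Fam. EB B0) = (\<Sum>B0\<in>Fam. measure_pmf.prob ?M (EB B0))"
      by (intro measure_pmf.finite_measure_finite_Union[OF finF]) auto
    thus ?thesis by (simp add: sum_distrib_right)
  qed
  also have "\<dots> \<le> 1 * \<beta>"
    by (rule mult_right_mono) (auto simp: \<beta>_def)
  finally show ?thesis unfolding \<beta>_def by simp
qed



definition BV :: "nat \<Rightarrow> real \<Rightarrow> real \<Rightarrow> (nat \<times> nat \<Rightarrow> bool) \<Rightarrow> nat set \<Rightarrow> nat set" where
  "BV n p r E X = {v \<in> {..<n} - X. dev r (real (card X) * p) (card {x\<in>X. adj E v x})}"

definition BW :: "nat \<Rightarrow> real \<Rightarrow> real \<Rightarrow> (nat \<times> nat \<Rightarrow> bool) \<Rightarrow> nat \<Rightarrow> nat set \<Rightarrow> nat set" where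
  "BW n p r E v Y = {w \<in> {..<n} - Y - {v}. dev r (real (card Y) * p) (card {y\<in>Y. adj E w y})}"

lemma sq_bounds:
  fixes r \<rho> a y z p :: real
  assumes r: "0 \<le> r" "3 * r \<le> \<rho>" "r \<le> 1" and p: "0 \<le> p" and a: "0 \<le> a"
    and y1: "(1 - r) * (a * p) < y" and y2: "y < (1 + r) * (a * p)"
    and z1: "(1 - r) * (y * p) < z" and z2: "z < (1 + r) * (y * p)"
  shows "(1 - \<rho>) * a * p\<^sup>2 \<le> z \<and> z \<le> (1 + \<rho>) * a * p\<^sup>2"
proof
  have "(1 - r) * ((1 - r) * (a * p)) * p \<le> (1 - r) * y * p"
    using y1 r p by (intro mult_right_mono mult_left_mono) auto
  also have "\<dots> \<le> z" using z1 by (simp add: mult.assoc)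
  finally have l: "(1 - r)^2 * (a * p\<^sup>2) \<le> z" by (simp add: power2_eq_square mult_ac)
  have "(1 - \<rho>) \<le> (1 - r)^2" using r by (simp add: power2_eq_square algebra_simps) (smt (verit) mult_nonneg_nonneg)
  hence "(1 - \<rho>) * (a * p\<^sup>2) \<le> (1 - r)^2 * (a * p\<^sup>2)" using a by (intro mult_right_mono) auto
  with l show "(1 - \<rho>) * a * p\<^sup>2 \<le> z" by (simp add: mult.assoc)
next
  have "z \<le> (1 + r) * y * p" using z2 by (simp add: mult.assoc)
  also have "\<dots> \<le> (1 + r) * ((1 + r) * (a * p)) * p"
    using y2 r p by (intro mult_right_mono mult_left_mono) auto
  finally have u: "z \<le> (1 + r)^2 * (a * p\<^sup>2)" by (simp add: power2_eq_square mult_ac)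
  have "(1 + r)^2 \<le> 1 + \<rho>" using r by (simp add: power2_eq_square algebra_simps) (smt (verit) mult_left_le_one_le)
  hence "(1 + r)^2 * (a * p\<^sup>2) \<le> (1 + \<rho>) * (a * p\<^sup>2)" using a by (intro mult_right_mono) auto
  with u show "z \<le> (1 + \<rho>) * a * p\<^sup>2" by (simp add: mult.assoc)
qed

lemma comb:
  fixes p r \<rho> :: real and N :: nat
  assumes r: "0 \<le> r" "3 * r \<le> \<rho>" "r \<le> 1" and p: "0 \<le> p" and N: "N > 0"
    and X: "X \<subseteq> {..<n}"
    and hA: "N * card (BV n p r E X) < n"
    and hB: "\<And>v. v \<in> {..<n} - X - BV n p r E X \<Longrightarrow> N * card (BW n p r E v {x\<in>X. adj E v x}) < n"
  shows "real (card (badpairs n p \<rho> E X)) \<le> 2 * real n ^ 2 / real N"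
proof -
  let ?BV = "BV n p r E X"
  let ?V = "{..<n} - X - ?BV"
  let ?W = "\<lambda>v. BW n p r E v {x\<in>X. adj E v x}"
  have sub: "badpairs n p \<rho> E X \<subseteq> (?BV \<times> {..<n}) \<union> Sigma ?V ?W"
  proof
    fix c assume c: "c \<in> badpairs n p \<rho> E X"
    obtain v w where cvw: "c = (v, w)" by (cases c)
    have vw: "v < w" "w < n" "v \<notin> X" "w \<notin> X"
      and bad: "\<not> ((1 - \<rho>) * real (card X) * p\<^sup>2 \<le> real (common_nbrs E X v w) \<and>
             real (common_nbrs E X v w) \<le> (1 + \<rho>) * real (card X) * p\<^sup>2)"
      using c unfolding cvw badpairs_def vpairs_def by auto
    show "c \<in> (?BV \<times> {..<n}) \<union> Sigma ?V ?W"
    proof (cases "v \<in> ?BV")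
      case True thus ?thesis using vw cvw by auto
    next
      case False
      hence vV: "v \<in> ?V" using vw by auto
      have "w \<in> ?W v"
      proof (rule ccontr)
        assume nw: "w \<notin> ?W v"
        let ?Y = "{x\<in>X. adj E v x}"
        have "\<not> dev r (real (card ?Y) * p) (card {y\<in>?Y. adj E w y})"
          using nw vw unfolding BW_def by auto
        hence z: "(1 - r) * (real (card ?Y) * p) < real (card {y\<in>?Y. adj E w y})"
                 "real (card {y\<in>?Y. adj E w y}) < (1 + r) * (real (card ?Y) * p)"
          unfolding dev_def by auto
        have "\<not> dev r (real (card X) * p) (card ?Y)"
          using False vw unfolding BV_def by auto
        hence y: "(1 - r) * (real (card X) * p) < real (card ?Y)" "real (card ?Y) < (1 + r) * (real (card X) * p)"
          unfolding dev_def by auto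
        have cn: "common_nbrs E X v w = card {y\<in>?Y. adj E w y}"
          unfolding common_nbrs_def by (rule arg_cong[where f = card]) auto
        have "(1 - \<rho>) * real (card X) * p\<^sup>2 \<le> real (common_nbrs E X v w) \<and>
             real (common_nbrs E X v w) \<le> (1 + \<rho>) * real (card X) * p\<^sup>2"
          unfolding cn by (rule sq_bounds[OF r p _ y z]) simp
        with bad show False by blast
      qed
      thus ?thesis using vV cvw by auto
    qed
  qed
  have finV: "finite ?V" by simp
  have finW: "\<And>v. finite (?W v)" unfolding BW_def by simp
  have "card (badpairs n p \<rho> E X) \<le> card ((?BV \<times> {..<n}) \<union> Sigma ?V ?W)"
    by (rule card_mono[OF _ sub]) (auto simp: BV_def finW)
  also have "\<dots> \<le> card (?BV \<times> {..<n}) + card (Sigma ?V ?W)" by (rule card_Un_le)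
  also have "card (Sigma ?V ?W) = (\<Sum>v\<in>?V. card (?W v))" by (rule card_SigmaI[OF finV]) (use finW in blast)
  finally have c0: "card (badpairs n p \<rho> E X) \<le> card ?BV * n + (\<Sum>v\<in>?V. card (?W v))"
    by (simp add: card_cartesian_product)
  hence "real (card (badpairs n p \<rho> E X)) \<le> real (card ?BV * n + (\<Sum>v\<in>?V. card (?W v)))"
    by (simp only: of_nat_le_iff)
  also have "\<dots> = real (card ?BV) * real n + (\<Sum>v\<in>?V. real (card (?W v)))"
    by (simp only: of_nat_add of_nat_mult of_nat_sum)
  finally have c1: "real (card (badpairs n p \<rho> E X)) \<le> real (card ?BV) * real n + (\<Sum>v\<in>?V. real (card (?W v)))" .
  have "real (card ?BV) \<le> real n / real N"
    using hA N by (simp add: field_simps) (metis of_nat_less_iff of_nat_mult less_imp_le of_nat_le_iff mult.commute)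
  hence a1: "real (card ?BV) * real n \<le> real n ^ 2 / real N"
    by (metis (no_types, lifting) mult_right_mono of_nat_0_le_iff power2_eq_square times_divide_eq_left)
  have "(\<Sum>v\<in>?V. real (card (?W v))) \<le> (\<Sum>v\<in>?V. real n / real N)"
  proof (rule sum_mono)
    fix v assume "v \<in> ?V"
    hence "N * card (?W v) < n" by (rule hB)
    thus "real (card (?W v)) \<le> real n / real N"
      using N by (simp add: field_simps) (metis of_nat_less_iff of_nat_mult less_imp_le of_nat_le_iff mult.commute)
  qed
  also have "\<dots> = real (card ?V) * (real n / real N)" by simp
  also have "\<dots> \<le> real n * (real n / real N)"
  proof (rule mult_right_mono)
    have "card ?V \<le> card {..<n}" by (rule card_mono) auto
    thus "real (card ?V) \<le> real n" by simp
  qed simp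
  finally have a2: "(\<Sum>v\<in>?V. real (card (?W v))) \<le> real n ^ 2 / real N" by (simp add: power2_eq_square)
  show ?thesis using c1 a1 a2 by simp
qed



lemma kdiv1: "N > 0 \<Longrightarrow> n \<le> N * c \<Longrightarrow> (n + N - 1) div N \<le> (c::nat)"
proof -
  assume N: "N > 0" and h: "n \<le> N * c"
  have "n + N - 1 < Suc c * N" using N h by (simp add: algebra_simps)
  hence "(n + N - 1) div N < Suc c" using div_less_iff_less_mult[OF N] by blast
  thus ?thesis by simp
qed

lemma kdiv2: "N > 0 \<Longrightarrow> n \<le> N * ((n + N - 1) div N)" for N n :: nat
  by (smt (verit, del_insts) Nat.add_diff_assoc2 One_nat_def Suc_leI
    add.commute add_Suc_right add_diff_cancel_left' dividend_less_div_times
    le_diff_conv mult.commute nat_arith.rule0)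

lemma qpow:
  fixes q :: real
  assumes "0 \<le> q" "q \<le> (1/8) ^ N" "n \<le> N * k"
  shows "2 ^ n * q ^ k \<le> (1/4) ^ n"
proof -
  have "q ^ k \<le> ((1/8) ^ N) ^ k" using assms by (intro power_mono) auto
  also have "\<dots> = (1/8) ^ (N * k)" by (simp add: power_mult)
  also have "\<dots> \<le> (1/8) ^ n" using assms(3) by (intro power_decreasing) auto
  finally have "2 ^ n * q ^ k \<le> 2 ^ n * (1/8::real) ^ n" by (intro mult_left_mono) auto
  also have "\<dots> = (1/4) ^ n" by (simp add: power_mult_distrib[symmetric])
  finally show ?thesis .
qed

lemma union_bound:
  fixes M :: "'a pmf"
  assumes "finite F" "\<And>i. i \<in> F \<Longrightarrow> measure_pmf.prob M (A i) \<le> b"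
  shows "measure_pmf.prob M (\<Union>i\<in>F. A i) \<le> real (card F) * b"
proof -
  have "measure_pmf.prob M (\<Union>i\<in>F. A i) \<le> (\<Sum>i\<in>F. measure_pmf.prob M (A i))"
    by (rule measure_pmf.finite_measure_subadditive_finite[OF assms(1)]) simp
  also have "\<dots> \<le> (\<Sum>i\<in>F. b)" by (rule sum_mono) (rule assms(2))
  finally show ?thesis by simp
qed

lemma fixed_n:
  fixes p r \<rho> \<epsilon> D :: real and N n :: nat
  assumes p: "0 < p" "p \<le> 1" and r: "0 < r" "3 * r \<le> \<rho>" "r \<le> 1/3"
    and N: "N > 0" and D: "D > 0"
    and qc: "2 * exp (- (r\<^sup>2 * ((1 - r) * D) / 4)) \<le> (1/8) ^ N"
    and eN: "2 * (exp 1 - 1) / real N \<le> \<epsilon> / 2"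
  shows "measure_pmf.prob (gnp n p) {E. good_property n p \<epsilon> \<rho> D E}
         \<ge> 1 - ((1/2) ^ n + real n * (1/2) ^ n + 2 ^ n * exp (- (\<epsilon> * real n ^ 2 * p / 2)))"
proof -
  let ?M = "gnp n p"
  define k where "k = (n + N - 1) div N"
  have k1: "\<And>c. n \<le> N * c \<Longrightarrow> k \<le> c" unfolding k_def using kdiv1[OF N] by blast
  have k2: "n \<le> N * k" unfolding k_def by (rule kdiv2[OF N])
  have r1: "r \<le> 1" "0 \<le> r" using r by auto
  have p0: "0 \<le> p" using p by simp
  define q0 where "q0 = 2 * exp (- (r\<^sup>2 * ((1 - r) * D) / 4))"
  have qmono: "2 * exp (- (r\<^sup>2 * m / 4)) \<le> (1/8) ^ N" if "m \<ge> (1 - r) * D" for m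
  proof -
    have "2 * exp (- (r\<^sup>2 * m / 4)) \<le> q0" unfolding q0_def
      using that r by (intro mult_left_mono exp_mono) (auto intro!: divide_right_mono mult_left_mono)
    from order_trans[OF this[unfolded q0_def] qc] show ?thesis .
  qed
  define XA where "XA = {X. X \<subseteq> {..<n} \<and> real (card X) \<ge> D / p\<^sup>2}"
  define VY where "VY = {(v, Y). v < n \<and> Y \<subseteq> {..<n} \<and> v \<notin> Y \<and> real (card Y) * p \<ge> (1 - r) * D}"
  define FA where "FA = (\<Union>X\<in>XA. {E. card (BV n p r E X) \<ge> k})"
  define FB where "FB = (\<Union>vY\<in>VY. {E. card (BW n p r E (fst vY) (snd vY)) \<ge> k})"
  define FF where "FF = (\<Union>X\<in>XA. {E. real (card (bad_edges n p \<rho> E X)) \<ge> \<epsilon> * real n ^ 2 * p \<and>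
                                      real (card (badpairs n p \<rho> E X)) \<le> 2 * real n ^ 2 / real N})"
  have finXA: "finite XA" unfolding XA_def by (rule finite_subset[of _ "Pow {..<n}"]) auto
  have cXA: "card XA \<le> 2 ^ n"
  proof -
    have "card XA \<le> card (Pow {..<n::nat})" unfolding XA_def by (rule card_mono) auto
    thus ?thesis by (simp add: card_Pow)
  qed
  have finVY: "finite VY" unfolding VY_def by (rule finite_subset[of _ "{..<n} \<times> Pow {..<n}"]) auto
  have cVY: "card VY \<le> n * 2 ^ n"
  proof -
    have "card VY \<le> card ({..<n} \<times> Pow {..<n::nat})" unfolding VY_def by (rule card_mono) auto
    thus ?thesis by (simp add: card_Pow card_cartesian_product)
  qed
  have PA: "measure_pmf.prob ?M FA \<le> (1/2) ^ n"
  proof -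
    have "measure_pmf.prob ?M FA \<le> real (card XA) * (1/4) ^ n"
      unfolding FA_def
    proof (rule union_bound[OF finXA, where A = "\<lambda>X. {E. card (BV n p r E X) \<ge> k}"])
      fix X assume X: "X \<in> XA"
      have Xn: "X \<subseteq> {..<n}" and XD: "real (card X) \<ge> D / p\<^sup>2" using X unfolding XA_def by auto
      have eq: "{E. card (BV n p r E X) \<ge> k} =
         {E. card {w\<in>{..<n} - X. dev r (real (card X) * p) (card {z\<in>X. adj E w z})} \<ge> k}"
        unfolding BV_def ..
      have "measure_pmf.prob ?M {E. card (BV n p r E X) \<ge> k}
            \<le> 2 ^ n * (2 * exp (- (r\<^sup>2 * (real (card X) * p) / 4))) ^ k"
        unfolding eq by (rule claim_count[OF p0 p(2) r1(2) r1(1) Xn]) auto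
      also have "\<dots> \<le> (1/4) ^ n"
      proof (rule qpow[OF _ _ k2])
        have "D \<le> D / p" using D p by (simp add: field_simps)
        also have "D / p = D / p\<^sup>2 * p" using p by (simp add: power2_eq_square field_simps)
        also have "\<dots> \<le> real (card X) * p" using XD p by (intro mult_right_mono) auto
        finally have "D \<le> real (card X) * p" .
        moreover have "(1 - r) * D \<le> D" using r D by (simp add: algebra_simps)
        ultimately show "2 * exp (- (r\<^sup>2 * (real (card X) * p) / 4)) \<le> (1/8) ^ N"
          by (intro qmono) simp
      qed simp
      finally show "measure_pmf.prob ?M {E. card (BV n p r E X) \<ge> k} \<le> (1/4) ^ n" .
    qed
    also have "\<dots> \<le> 2 ^ n * (1/4) ^ n"
    proof (rule mult_right_mono)
      have "real (card XA) \<le> real (2 ^ n)" using cXA by (simp only: of_nat_le_iff)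
      thus "real (card XA) \<le> 2 ^ n" by simp
    qed simp
    also have "\<dots> = (1/2) ^ n" by (simp add: power_mult_distrib[symmetric])
    finally show ?thesis .
  qed
  have PB: "measure_pmf.prob ?M FB \<le> real n * (1/2) ^ n"
  proof -
    have "measure_pmf.prob ?M FB \<le> real (card VY) * (1/4) ^ n"
      unfolding FB_def
    proof (rule union_bound[OF finVY, where A = "\<lambda>vY. {E. card (BW n p r E (fst vY) (snd vY)) \<ge> k}"])
      fix vY assume vY: "vY \<in> VY"
      obtain v Y where vYe: "vY = (v, Y)" by (cases vY)
      have v: "v < n" "v \<notin> Y" and Yn: "Y \<subseteq> {..<n}" and YD: "real (card Y) * p \<ge> (1 - r) * D"
        using vY unfolding VY_def vYe by auto
      have eq: "{E. card (BW n p r E (fst vY) (snd vY)) \<ge> k} =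
         {E. card {w\<in>{..<n} - Y - {v}. dev r (real (card Y) * p) (card {z\<in>Y. adj E w z})} \<ge> k}"
        unfolding BW_def vYe by simp
      have "measure_pmf.prob ?M {E. card (BW n p r E (fst vY) (snd vY)) \<ge> k}
            \<le> 2 ^ n * (2 * exp (- (r\<^sup>2 * (real (card Y) * p) / 4))) ^ k"
        unfolding eq by (rule claim_count[OF p0 p(2) r1(2) r1(1) Yn]) auto
      also have "\<dots> \<le> (1/4) ^ n"
        by (rule qpow[OF _ qmono[OF YD] k2]) simp
      finally show "measure_pmf.prob ?M {E. card (BW n p r E (fst vY) (snd vY)) \<ge> k} \<le> (1/4) ^ n" .
    qed
    also have "\<dots> \<le> (real n * 2 ^ n) * (1/4) ^ n"
    proof (rule mult_right_mono)
      have "real (card VY) \<le> real (n * 2 ^ n)" using cVY by (simp only: of_nat_le_iff)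
      thus "real (card VY) \<le> real n * 2 ^ n" by simp
    qed simp
    also have "\<dots> = real n * (1/2) ^ n" by (simp add: power_mult_distrib[symmetric] mult.assoc)
    finally show ?thesis .
  qed
  have PF: "measure_pmf.prob ?M FF \<le> 2 ^ n * exp (- (\<epsilon> * real n ^ 2 * p / 2))"
  proof -
    have "measure_pmf.prob ?M FF \<le> real (card XA) * exp (- (\<epsilon> * real n ^ 2 * p / 2))"
      unfolding FF_def
    proof (rule union_bound[OF finXA, where A = "\<lambda>X. {E. real (card (bad_edges n p \<rho> E X)) \<ge> \<epsilon> * real n ^ 2 * p \<and>
                                      real (card (badpairs n p \<rho> E X)) \<le> 2 * real n ^ 2 / real N}"])
      fix X assume X: "X \<in> XA"
      have "measure_pmf.prob ?M {E. real (card (bad_edges n p \<rho> E X)) \<ge> \<epsilon> * real n ^ 2 * p \<and>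
                                      real (card (badpairs n p \<rho> E X)) \<le> 2 * real n ^ 2 / real N}
            \<le> exp (2 * real n ^ 2 / real N * p * (exp 1 - 1) - \<epsilon> * real n ^ 2 * p)"
        by (rule final_bound[OF p0 p(2)])
      also have "\<dots> \<le> exp (- (\<epsilon> * real n ^ 2 * p / 2))"
      proof (rule exp_mono)
        have "2 * real n ^ 2 / real N * p * (exp 1 - 1) = (2 * (exp 1 - 1) / real N) * (real n ^ 2 * p)"
          by (simp add: field_simps)
        also have "\<dots> \<le> (\<epsilon> / 2) * (real n ^ 2 * p)"
          using eN p by (intro mult_right_mono) auto
        finally show "2 * real n ^ 2 / real N * p * (exp 1 - 1) - \<epsilon> * real n ^ 2 * p
                      \<le> - (\<epsilon> * real n ^ 2 * p / 2)" by (simp add: field_simps)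
      qed
      finally show "measure_pmf.prob ?M {E. real (card (bad_edges n p \<rho> E X)) \<ge> \<epsilon> * real n ^ 2 * p \<and>
                                      real (card (badpairs n p \<rho> E X)) \<le> 2 * real n ^ 2 / real N}
            \<le> exp (- (\<epsilon> * real n ^ 2 * p / 2))" .
    qed
    also have "\<dots> \<le> 2 ^ n * exp (- (\<epsilon> * real n ^ 2 * p / 2))"
    proof (rule mult_right_mono)
      have "real (card XA) \<le> real (2 ^ n)" using cXA by (simp only: of_nat_le_iff)
      thus "real (card XA) \<le> 2 ^ n" by simp
    qed simp
    finally show ?thesis .
  qed
  have incl: "- {E. good_property n p \<epsilon> \<rho> D E} \<subseteq> FA \<union> FB \<union> FF"
  proof
    fix E assume E: "E \<in> - {E. good_property n p \<epsilon> \<rho> D E}"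
    show "E \<in> FA \<union> FB \<union> FF"
    proof (rule ccontr)
      assume nE: "E \<notin> FA \<union> FB \<union> FF"
      have "good_property n p \<epsilon> \<rho> D E"
        unfolding good_property_def
      proof (intro allI impI)
        fix X assume Xn: "X \<subseteq> {..<n}" and XD: "D / p\<^sup>2 \<le> real (card X)"
        have XA: "X \<in> XA" unfolding XA_def using Xn XD by auto
        have hA: "N * card (BV n p r E X) < n"
        proof (rule ccontr)
          assume "\<not> N * card (BV n p r E X) < n"
          hence "k \<le> card (BV n p r E X)" using k1 by simp
          thus False using nE XA unfolding FA_def by blast
        qed
        have hB: "N * card (BW n p r E v {x\<in>X. adj E v x}) < n"
          if v: "v \<in> {..<n} - X - BV n p r E X" for v
        proof (rule ccontr)
          let ?Y = "{x\<in>X. adj E v x}"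
          assume "\<not> N * card (BW n p r E v ?Y) < n"
          hence kk: "k \<le> card (BW n p r E v ?Y)" using k1 by simp
          have "\<not> dev r (real (card X) * p) (card ?Y)" using v unfolding BV_def by auto
          hence Ylow: "(1 - r) * (real (card X) * p) < real (card ?Y)" unfolding dev_def by auto
          have "(1 - r) * D \<le> (1 - r) * (real (card X) * p * p)"
          proof (rule mult_left_mono)
            have "D = D / p\<^sup>2 * p * p" using p by (simp add: power2_eq_square field_simps)
            also have "\<dots> \<le> real (card X) * p * p" using XD p by (intro mult_right_mono) auto
            finally show "D \<le> real (card X) * p * p" .
          qed (use r in auto)
          also have "\<dots> \<le> real (card ?Y) * p" using Ylow p by (simp add: mult.assoc[symmetric])
          finally have "(1 - r) * D \<le> real (card ?Y) * p" .
          hence "(v, ?Y) \<in> VY" unfolding VY_def using v Xn by auto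
          thus False using nE kk unfolding FB_def by fastforce
        qed
        have "real (card (badpairs n p \<rho> E X)) \<le> 2 * real n ^ 2 / real N"
          by (rule comb[OF r1(2) r(2) r1(1) p0 N Xn hA hB])
        hence "\<not> real (card (bad_edges n p \<rho> E X)) \<ge> \<epsilon> * real n ^ 2 * p"
          using nE XA unfolding FF_def by blast
        thus "real (card (bad_edges n p \<rho> E X)) \<le> \<epsilon> * (real n)\<^sup>2 * p" by simp
      qed
      thus False using E by simp
    qed
  qed
  have "measure_pmf.prob ?M (- {E. good_property n p \<epsilon> \<rho> D E}) \<le> measure_pmf.prob ?M (FA \<union> FB \<union> FF)"
    by (rule measure_pmf.finite_measure_mono[OF incl]) simp
  also have "\<dots> \<le> measure_pmf.prob ?M FA + measure_pmf.prob ?M FB + measure_pmf.prob ?M FF"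
  proof -
    have "measure_pmf.prob ?M (FA \<union> FB \<union> FF) \<le> measure_pmf.prob ?M (FA \<union> FB) + measure_pmf.prob ?M FF"
      by (rule measure_subadditive) auto
    moreover have "measure_pmf.prob ?M (FA \<union> FB) \<le> measure_pmf.prob ?M FA + measure_pmf.prob ?M FB"
      by (rule measure_subadditive) auto
    ultimately show ?thesis by simp
  qed
  also have "\<dots> \<le> (1/2) ^ n + real n * (1/2) ^ n + 2 ^ n * exp (- (\<epsilon> * real n ^ 2 * p / 2))"
    using PA PB PF by simp
  finally have "measure_pmf.prob ?M (- {E. good_property n p \<epsilon> \<rho> D E}) \<le> \<dots>" .
  moreover have "measure_pmf.prob ?M (- {E. good_property n p \<epsilon> \<rho> D E}) = 1 - measure_pmf.prob ?M {E. good_property n p \<epsilon> \<rho> D E}"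
    by (simp add: measure_pmf.prob_compl[symmetric] Compl_eq_Diff_UNIV)
  ultimately show ?thesis by simp
qed



lemma sqrt_le_self_nat: "sqrt (real n) \<le> real n"
proof (cases "n = 0")
  case False
  hence "1 \<le> real n" by simp
  hence "sqrt (real n) * 1 \<le> sqrt (real n) * sqrt (real n)" by (intro mult_left_mono) auto
  thus ?thesis by simp
qed simp

lemma pow_exp_bound:
  fixes e p :: real and n :: nat
  assumes "2 * ln 2 \<le> e * (p * real n) / 2"
  shows "2 ^ n * exp (- (e * real n ^ 2 * p / 2)) \<le> (1/2) ^ n"
proof -
  have t: "(2::real) ^ n = exp (real n * ln 2)" by (simp add: exp_of_nat_mult)
  have h: "(1/2::real) ^ n = exp (- (real n * ln 2))"
    by (simp add: exp_minus exp_of_nat_mult power_one_over inverse_eq_divide)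
  have "real n * (2 * ln 2) \<le> real n * (e * (p * real n) / 2)"
    by (rule mult_left_mono[OF assms]) simp
  hence "real n * ln 2 - e * real n ^ 2 * p / 2 \<le> - (real n * ln 2)"
    by (simp add: power2_eq_square algebra_simps)
  hence "exp (real n * ln 2 - e * real n ^ 2 * p / 2) \<le> exp (- (real n * ln 2))" by simp
  moreover have "2 ^ n * exp (- (e * real n ^ 2 * p / 2)) = exp (real n * ln 2 + - (e * real n ^ 2 * p / 2))"
    unfolding t by (simp only: exp_add)
  ultimately show ?thesis unfolding h by simp
qed

theorem proposition4p4:
  fixes p :: "nat \<Rightarrow> real"
  assumes "\<And>n. 0 \<le> p n \<and> p n \<le> 1"
    and "filterlim (\<lambda>n. p n * sqrt (real n)) at_top sequentially"
  shows "\<forall>\<epsilon>>0. \<forall>\<rho>>0. \<exists>D>0.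
           (\<lambda>n. measure_pmf.prob (gnp n (p n)) {E. good_property n (p n) \<epsilon> \<rho> D E})
             \<longlonglongrightarrow> 1"
proof (intro allI impI)
  fix \<epsilon> \<rho> :: real assume \<epsilon>: "\<epsilon> > 0" and \<rho>: "\<rho> > 0"
  define r where "r = min \<rho> 1 / 3"
  have r: "0 < r" "3 * r \<le> \<rho>" "r \<le> 1/3" unfolding r_def using \<rho> by auto
  define N :: nat where "N = nat \<lceil>8 / \<epsilon>\<rceil> + 1"
  have N: "N > 0" unfolding N_def by simp
  have N8: "8 / \<epsilon> \<le> real N" unfolding N_def by linarith
  have eN: "2 * (exp 1 - 1) / real N \<le> \<epsilon> / 2"
  proof -
    have "2 * (exp 1 - 1) \<le> (4::real)" using exp_le by simp
    hence "2 * (exp 1 - 1) / real N \<le> 4 / real N" using N by (intro divide_right_mono) auto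
    also have "\<dots> \<le> \<epsilon> / 2" using N8 \<epsilon> N by (simp add: field_simps)
    finally show ?thesis .
  qed
  define c where "c = r\<^sup>2 * (1 - r) / 4"
  have c: "c > 0" unfolding c_def using r by auto
  define D where "D = (ln 2 + real N * ln 8) / c"
  have D: "D > 0" unfolding D_def using c by (intro divide_pos_pos add_pos_nonneg) auto
  have qc: "2 * exp (- (r\<^sup>2 * ((1 - r) * D) / 4)) \<le> (1/8) ^ N"
  proof -
    have "r\<^sup>2 * ((1 - r) * D) / 4 = c * D" unfolding c_def by (simp add: algebra_simps)
    also have "\<dots> = ln 2 + real N * ln 8" unfolding D_def using c by simp
    finally have e: "- (r\<^sup>2 * ((1 - r) * D) / 4) = - ln 2 + real N * (- ln 8)" by (simp add: field_simps)
    have "2 * exp (- ln 2 + real N * (- ln 8)) = 2 * (exp (- ln 2) * exp (- ln 8) ^ N)"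
      by (simp only: exp_add exp_of_nat_mult)
    also have "\<dots> = (1/8) ^ N" by (simp add: exp_minus power_one_over)
    finally show ?thesis unfolding e by simp
  qed
  show "\<exists>D>0. (\<lambda>n. measure_pmf.prob (gnp n (p n)) {E. good_property n (p n) \<epsilon> \<rho> D E}) \<longlonglongrightarrow> 1"
  proof (intro exI conjI)
    show "D > 0" by (rule D)
    define g where "g = (\<lambda>n::nat. (1/2::real) ^ n + real n * (1/2) ^ n + (1/2) ^ n)"
    have g0: "g \<longlonglongrightarrow> 0"
    proof -
      have a: "(\<lambda>n::nat. (1/2::real) ^ n) \<longlonglongrightarrow> 0" by (rule LIMSEQ_power_zero) simp
      have b: "(\<lambda>n::nat. real n * (1/2::real) ^ n) \<longlonglongrightarrow> 0" by (rule powser_times_n_limit_0) simp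
      show ?thesis unfolding g_def using tendsto_add[OF tendsto_add[OF a b] a] by simp
    qed
    have ev1: "eventually (\<lambda>n. 1 \<le> p n * sqrt (real n)) sequentially"
      using assms(2) unfolding filterlim_at_top by blast
    have np: "filterlim (\<lambda>n. p n * real n) at_top sequentially"
    proof (rule filterlim_at_top_mono[OF assms(2)])
      show "eventually (\<lambda>n. p n * sqrt (real n) \<le> p n * real n) sequentially"
        using assms(1) by (intro always_eventually allI mult_left_mono sqrt_le_self_nat) auto
    qed
    have ev2: "eventually (\<lambda>n. 4 * ln 2 / \<epsilon> \<le> p n * real n) sequentially"
      using np unfolding filterlim_at_top by blast
    have ev: "eventually (\<lambda>n. 1 - g n \<le> measure_pmf.prob (gnp n (p n)) {E. good_property n (p n) \<epsilon> \<rho> D E}) sequentially"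
      using ev1 ev2
    proof eventually_elim
      case (elim n)
      have pn: "0 < p n"
      proof (rule ccontr)
        assume "\<not> 0 < p n"
        hence "p n = 0" using assms(1)[of n] by simp
        thus False using elim(1) by simp
      qed
      have "2 * ln 2 \<le> \<epsilon> * (p n * real n) / 2"
      proof -
        have "\<epsilon> * (4 * ln 2 / \<epsilon>) \<le> \<epsilon> * (p n * real n)" using elim(2) \<epsilon> by (intro mult_left_mono) auto
        thus ?thesis using \<epsilon> by simp
      qed
      hence pe: "2 ^ n * exp (- (\<epsilon> * real n ^ 2 * p n / 2)) \<le> (1/2) ^ n" by (rule pow_exp_bound)
      have "1 - ((1/2) ^ n + real n * (1/2) ^ n + 2 ^ n * exp (- (\<epsilon> * real n ^ 2 * p n / 2)))
            \<le> measure_pmf.prob (gnp n (p n)) {E. good_property n (p n) \<epsilon> \<rho> D E}"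
        by (rule fixed_n[OF pn _ r N D qc eN]) (use assms(1) in simp)
      thus ?case using pe unfolding g_def by simp
    qed
    have "(\<lambda>n. 1 - g n) \<longlonglongrightarrow> 1 - 0" by (intro tendsto_diff tendsto_const g0)
    hence lo: "(\<lambda>n. 1 - g n) \<longlonglongrightarrow> 1" by simp
    show "(\<lambda>n. measure_pmf.prob (gnp n (p n)) {E. good_property n (p n) \<epsilon> \<rho> D E}) \<longlonglongrightarrow> 1"
      by (rule tendsto_sandwich[OF ev _ lo tendsto_const]) (simp add: measure_pmf.prob_le_1)
  qed
qed


end
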